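(* Losanitsch's triangle $(L(n,k))_{n,k\ge0}$ has the property that for each $k\ge 0$ its $k$-th column $(L(n,k))_{n\ge0}$ equals either $(e(n,k))_{n\ge 0}$ or $(o(n,k))_{n\ge0}$, and $L(n,n)=1$ for all $n\ge 0$; moreover it is the unique matrix $(a(n,k))_{n,k\ge0}$ with these two properties.
   Context: $e(n,k)$ (resp. $o(n,k)$) is the number of $k$-element subsets of $\{1,\dots,n\}$ whose sum of elements is even (resp. odd); the empty set counts as even. Losanitsch's triangle $(L(n,k))_{n,k\ge 0}$ is defined by $L(0,k)=[k=0]$, $L(1,k)=[k\le 1]$ for $k\ge0$, $L(n,k)=0$ for $k<0$, and for $n\ge 2$ and all $k$: $L(n,k)=L(n-2,k)+\binom{n-2}{k-1}+L(n-2,k-2)$, where $\binom{m}{j}=0$ for $j<0$ or $j>m$. *)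

theory Defs
  imports Main
begin

definition e_sub :: "nat \<Rightarrow> nat \<Rightarrow> nat" where
  "e_sub n k = card {S. S \<subseteq> {1..n} \<and> card S = k \<and> even (\<Sum>S)}"

definition o_sub :: "nat \<Rightarrow> nat \<Rightarrow> nat" where
  "o_sub n k = card {S. S \<subseteq> {1..n} \<and> card S = k \<and> odd (\<Sum>S)}"

text \<open>Losanitsch's triangle for n, k >= 0 (entries with negative k are 0, which
  is encoded by the guards in the recursion).\<close>
fun losanitsch :: "nat \<Rightarrow> nat \<Rightarrow> nat" where
  "losanitsch 0 k = (if k = 0 then 1 else 0)"
| "losanitsch (Suc 0) k = (if k \<le> 1 then 1 else 0)"
| "losanitsch (Suc (Suc n)) k =
     losanitsch n k + (if k = 0 then 0 else n choose (k - 1))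
     + (if k < 2 then 0 else losanitsch n (k - 2))"

end

theory Submission
  imports Defs
begin

definition P :: "nat \<Rightarrow> nat \<Rightarrow> nat \<Rightarrow> nat" where
  "P n k p = card {S. S \<subseteq> {1..n} \<and> card S = k \<and> (\<Sum>S) mod 2 = p mod 2}"

definition cc :: "nat \<Rightarrow> nat" where "cc k = k * (k + 1) div 2"

lemma cc_SS: "cc (Suc (Suc j)) = cc j + (2*j + 3)"
proof -
  have "Suc (Suc j) * (Suc (Suc j) + 1) = j * (j + 1) + (2*j + 3) * 2" by (simp add: algebra_simps)
  then show ?thesis unfolding cc_def by simp
qed

lemma cc_S: "cc (Suc j) = cc j + (j + 1)"
proof -
  have "Suc j * (Suc j + 1) = j * (j + 1) + (j + 1) * 2" by (simp add: algebra_simps)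
  then show ?thesis unfolding cc_def by simp
qed

lemma P_cong: "p mod 2 = q mod 2 \<Longrightarrow> P n k p = P n k q"
  unfolding P_def by simp

lemma fin_sub: "finite {S. S \<subseteq> {1..(n::nat)} \<and> Q S}"
  by (rule finite_subset[of _ "Pow {1..n}"]) auto

lemma P_0: "P n 0 p = (if p mod 2 = 0 then 1 else 0)"
proof -
  have "{S. S \<subseteq> {1..n} \<and> card S = 0 \<and> (\<Sum>S) mod 2 = p mod 2}
        = (if p mod 2 = 0 then {{}} else {})"
    using finite_subset[of _ "{1..n}"] by (auto simp: card_eq_0_iff)
  then show ?thesis unfolding P_def by simp
qed

lemma P_sum: "P n k 0 + P n k 1 = n choose k"
proof -
  let ?A = "{S. S \<subseteq> {1..n} \<and> card S = k \<and> (\<Sum>S) mod 2 = 0 mod 2}"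
  let ?B = "{S. S \<subseteq> {1..n} \<and> card S = k \<and> (\<Sum>S) mod 2 = 1 mod 2}"
  have "?A \<union> ?B = {S. S \<subseteq> {1..n} \<and> card S = k}" by auto
  moreover have "card (?A \<union> ?B) = card ?A + card ?B"
    by (rule card_Un_disjoint) (auto intro: fin_sub)
  moreover have "card {S. S \<subseteq> {1..n} \<and> card S = k} = n choose k"
    using n_subsets[of "{1..n}" k] by simp
  ultimately show ?thesis unfolding P_def by simp
qed

lemma P_zero: "P n k 0 + P n k 1 = 0 \<Longrightarrow> P n k p = 0"
proof (cases "p mod 2 = 0")
  case True then show "P n k 0 + P n k 1 = 0 \<Longrightarrow> P n k p = 0" using P_cong[of p 0 n k] by simp
next
  case False then have "p mod 2 = 1 mod 2" by presburger
  then show "P n k 0 + P n k 1 = 0 \<Longrightarrow> P n k p = 0" using P_cong[of p 1 n k] by simp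
qed

lemma P_Suc: "P (Suc n) (Suc k) p = P n (Suc k) p + P n k (p + Suc n)"
proof -
  let ?A = "{S. S \<subseteq> {1..n} \<and> card S = Suc k \<and> (\<Sum>S) mod 2 = p mod 2}"
  let ?B = "{S. S \<subseteq> {1..n} \<and> card S = k \<and> (\<Sum>S) mod 2 = (p + Suc n) mod 2}"
  let ?C = "{S. S \<subseteq> {1..Suc n} \<and> card S = Suc k \<and> (\<Sum>S) mod 2 = p mod 2}"
  have eq: "?C = ?A \<union> insert (Suc n) ` ?B"
  proof (rule set_eqI, rule iffI)
    fix S assume S: "S \<in> ?C"
    have fS: "finite S" using S finite_subset[of S "{1..Suc n}"] by auto
    show "S \<in> ?A \<union> insert (Suc n) ` ?B"
    proof (cases "Suc n \<in> S")
      case False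
      then have "S \<subseteq> {1..n}" using S by (auto simp: atLeastAtMostSuc_conv)
      then show ?thesis using S by auto
    next
      case True
      let ?T = "S - {Suc n}"
      have T1: "?T \<subseteq> {1..n}" using S by (auto simp: atLeastAtMostSuc_conv)
      have T2: "card ?T = k" using S True fS by simp
      have "\<Sum>S = Suc n + \<Sum>?T" using True fS by (simp add: sum.remove)
      moreover have "(\<Sum>S) mod 2 = p mod 2" using S by simp
      ultimately have "(Suc n + \<Sum>?T) mod 2 = p mod 2" by simp
      then have T3: "(\<Sum>?T) mod 2 = (p + Suc n) mod 2" by presburger
      have "S = insert (Suc n) ?T" using True by auto
      then show ?thesis using T1 T2 T3 by blast
    qed
  next
    fix S assume S: "S \<in> ?A \<union> insert (Suc n) ` ?B"
    show "S \<in> ?C"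
    proof (cases "S \<in> ?A")
      case True then show ?thesis by auto
    next
      case False
      then obtain T where T: "T \<in> ?B" "S = insert (Suc n) T" using S by auto
      have fT: "finite T" using T finite_subset[of T "{1..n}"] by auto
      have nT: "Suc n \<notin> T" using T by auto
      have "\<Sum>S = Suc n + \<Sum>T" using T fT nT by simp
      moreover have "(\<Sum>T) mod 2 = (p + Suc n) mod 2" using T by simp
      ultimately have "(\<Sum>S) mod 2 = p mod 2" by presburger
      moreover have "card S = Suc k" using T fT nT by simp
      moreover have "S \<subseteq> {1..Suc n}" using T by auto
      ultimately show ?thesis by auto
    qed
  qed
  have inj: "inj_on (insert (Suc n)) ?B"
  proof (rule inj_onI)
    fix x y assume x: "x \<in> ?B" and y: "y \<in> ?B" and e: "insert (Suc n) x = insert (Suc n) y"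
    have "Suc n \<notin> x" "Suc n \<notin> y" using x y by auto
    then show "x = y" using e insert_ident by metis
  qed
  have disj: "?A \<inter> insert (Suc n) ` ?B = {}" by auto
  have "card ?C = card ?A + card (insert (Suc n) ` ?B)"
    unfolding eq by (rule card_Un_disjoint) (auto intro: fin_sub disj)
  also have "card (insert (Suc n) ` ?B) = card ?B" using inj by (rule card_image)
  finally show ?thesis unfolding P_def .
qed

lemma L_P: "losanitsch n k = P n k (cc k)"
proof (induction n k rule: losanitsch.induct)
  case (1 k)
  show ?case
  proof (cases k)
    case 0 then show ?thesis by (simp add: P_0 cc_def)
  next
    case (Suc j)
    have "P 0 (Suc j) p = 0" for p
      using P_sum[of 0 "Suc j"] by (intro P_zero) simp
    then show ?thesis using Suc by simp
  qed
next
  case (2 k)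
  have z: "P 0 (Suc j) p = 0" for j p
    using P_sum[of 0 "Suc j"] by (intro P_zero) simp
  show ?case
  proof (cases k)
    case 0 then show ?thesis by (simp add: P_0 cc_def)
  next
    case (Suc j)
    show ?thesis
    proof (cases j)
      case 0 then show ?thesis using Suc by (simp add: P_Suc z P_0 cc_def)
    next
      case (Suc i)
      then show ?thesis using \<open>k = Suc j\<close> by (simp add: P_Suc z)
    qed
  qed
next
  case (3 n k)
  show ?case
  proof (cases k)
    case 0 then show ?thesis using 3 by (simp add: P_0 cc_def)
  next
    case (Suc j)
    show ?thesis
    proof (cases j)
      case 0
      have "P (Suc (Suc n)) 1 1 = P n 1 1 + (P n 0 (1 + Suc n) + P n 0 (1 + Suc (Suc n)))"
        using P_Suc[of "Suc n" 0 1] P_Suc[of n 0 1] P_0 by simp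
      also have "P n 0 (1 + Suc n) + P n 0 (1 + Suc (Suc n)) = 1"
        by (simp add: P_0; presburger)
      finally show ?thesis using 3 Suc 0 by (simp add: cc_def)
    next
      case (Suc i)
      have kk: "k = Suc (Suc i)" using \<open>k = Suc j\<close> Suc by simp
      let ?p = "cc (Suc (Suc i))"
      have "P (Suc (Suc n)) (Suc (Suc i)) ?p
          = P n (Suc (Suc i)) ?p + (P n (Suc i) (?p + Suc n) + P n (Suc i) (?p + Suc (Suc n)))
            + P n i (?p + Suc (Suc n) + Suc n)"
        using P_Suc[of "Suc n" "Suc i" ?p] P_Suc[of n "Suc i" ?p] P_Suc[of n i] by simp
      also have "P n (Suc i) (?p + Suc n) + P n (Suc i) (?p + Suc (Suc n)) = n choose Suc i"
      proof (cases "(?p + Suc n) mod 2 = 0")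
        case True
        have "P n (Suc i) (?p + Suc n) = P n (Suc i) 0"
          by (rule P_cong) (use True in presburger)
        moreover have "P n (Suc i) (?p + Suc (Suc n)) = P n (Suc i) 1"
          by (rule P_cong) (use True in presburger)
        ultimately show ?thesis using P_sum by simp
      next
        case False
        have "P n (Suc i) (?p + Suc n) = P n (Suc i) 1"
          by (rule P_cong) (use False in presburger)
        moreover have "P n (Suc i) (?p + Suc (Suc n)) = P n (Suc i) 0"
          by (rule P_cong) (use False in presburger)
        ultimately show ?thesis using P_sum[of n "Suc i"] by (simp add: add.commute)
      qed
      also have "P n i (?p + Suc (Suc n) + Suc n) = P n i (cc i)"
        by (rule P_cong) (simp add: cc_SS, presburger)
      finally show ?thesis using 3 kk by simp
    qed
  qed
qed

lemma Pnn: "P n n (cc n) = 1"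
proof (induction n)
  case 0 then show ?case by (simp add: P_0 cc_def)
next
  case (Suc n)
  have z: "P n (Suc n) p = 0" for p
    using P_sum[of n "Suc n"] by (intro P_zero) simp
  have "P n n (cc (Suc n) + Suc n) = P n n (cc n)"
    by (rule P_cong) (simp add: cc_S, presburger)
  then show ?case using Suc by (simp add: P_Suc z)
qed

lemma e_P: "e_sub n k = P n k 0" unfolding e_sub_def P_def by (simp add: even_iff_mod_2_eq_zero)
lemma o_P: "o_sub n k = P n k 1" unfolding o_sub_def P_def by (simp add: odd_iff_mod_2_eq_one)

lemma col: "(\<forall>n. losanitsch n k = e_sub n k) \<or> (\<forall>n. losanitsch n k = o_sub n k)"
proof (cases "cc k mod 2 = 0")
  case True
  then have "P n k (cc k) = P n k 0" for n by (auto intro: P_cong)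
  then show ?thesis by (simp add: L_P e_P)
next
  case False
  then have "P n k (cc k) = P n k 1" for n by (auto intro!: P_cong)
  then show ?thesis by (simp add: L_P o_P)
qed

lemma diag: "losanitsch n n = 1" by (simp add: L_P Pnn)

theorem proposition3p1:
  shows "(\<forall>k. (\<forall>n. losanitsch n k = e_sub n k) \<or> (\<forall>n. losanitsch n k = o_sub n k))
    \<and> (\<forall>n. losanitsch n n = 1)
    \<and> (\<forall>a :: nat \<Rightarrow> nat \<Rightarrow> nat.
          ((\<forall>k. (\<forall>n. a n k = e_sub n k) \<or> (\<forall>n. a n k = o_sub n k))
           \<and> (\<forall>n. a n n = 1)) \<longrightarrow> a = losanitsch)"
proof (intro conjI allI impI)
  fix k show "(\<forall>n. losanitsch n k = e_sub n k) \<or> (\<forall>n. losanitsch n k = o_sub n k)" by (rule col)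
next
  fix n show "losanitsch n n = 1" by (rule diag)
next
  fix a :: "nat \<Rightarrow> nat \<Rightarrow> nat"
  assume A: "(\<forall>k. (\<forall>n. a n k = e_sub n k) \<or> (\<forall>n. a n k = o_sub n k)) \<and> (\<forall>n. a n n = 1)"
  show "a = losanitsch"
  proof (rule ext, rule ext)
    fix n k
    have s: "e_sub k k + o_sub k k = 1" using P_sum[of k k] by (simp add: e_P o_P)
    have ak: "a k k = 1" using A by blast
    have lk: "losanitsch k k = 1" by (rule diag)
    have ca: "(\<forall>n. a n k = e_sub n k) \<or> (\<forall>n. a n k = o_sub n k)" using A by blast
    show "a n k = losanitsch n k"
    proof (cases "\<forall>n. a n k = e_sub n k")
      case T1: True
      show ?thesis
      proof (cases "\<forall>n. losanitsch n k = e_sub n k")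
        case True then show ?thesis using T1 by simp
      next
        case False
        then have "\<forall>n. losanitsch n k = o_sub n k" using col[of k] by blast
        then have False using T1 s ak lk by (metis add_right_cancel add_0 one_neq_zero add_left_cancel)
        then show ?thesis ..
      qed
    next
      case F1: False
      then have T1: "\<forall>n. a n k = o_sub n k" using ca by blast
      show ?thesis
      proof (cases "\<forall>n. losanitsch n k = o_sub n k")
        case True then show ?thesis using T1 by simp
      next
        case False
        then have "\<forall>n. losanitsch n k = e_sub n k" using col[of k] by blast
        then have False using T1 s ak lk by (metis add_right_cancel add_0 one_neq_zero add_left_cancel)
        then show ?thesis ..
      qed
    qed
  qed
qed

end
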